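(* Let $X$ be a Tychonoff space containing clopen subsets $U_n$, $n\in\omega$, such that $U_{n+1}\subset U_n$ for all $n\in\omega$ and $C=\bigcap_{n\in\omega}U_n$ is nonempty and not open. Then there exists a nondiscrete countable Tychonoff space $Y$ such that $F_G(Y)$, $A_G(Y)$, and $B_G(Y)$ are topological quotient groups of $F_G(X)$, $A_G(X)$, and $B_G(X)$, respectively.
   Context: For a Tychonoff space $X$ with a fixed point $x_0$, the Graev free topological group $F_G(X)$ is the unique topological group with identity $x_0$ containing $X$ as a subspace such that every continuous map from $X$ to a topological group $G$ sending $x_0$ to the identity extends to a continuous homomorphism $F_G(X)\to G$ (it does not depend on the choice of $x_0$ up to topological isomorphism). The Graev free Abelian topological group $A_G(X)$ and free Boolean topological group $B_G(X)$ are defined analogously, with the group being Abelian (resp. Boolean, i.e., all elements of order at most $2$) and only maps into Abelian (resp. Boolean) topological groups required to extend. A topological group $H$ is a topological quotient of $G$ if $H$ is topologically isomorphic to $G/N$ with the quotient topology for some closed normal subgroup $N$. *)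

theory Defs
  imports "HOL-Analysis.Analysis" "HOL-Algebra.Coset" "HOL-Algebra.Generated_Groups"
begin

definition tychonoff_space :: "'a topology \<Rightarrow> bool" where
  "tychonoff_space X \<longleftrightarrow> completely_regular_space X \<and> Hausdorff_space X"

definition topological_group :: "'g monoid \<Rightarrow> 'g topology \<Rightarrow> bool" where
  "topological_group G T \<longleftrightarrow> group G \<and> topspace T = carrier G \<and>
     continuous_map (prod_topology T T) T (\<lambda>p. fst p \<otimes>\<^bsub>G\<^esub> snd p) \<and>
     continuous_map T T (\<lambda>x. inv\<^bsub>G\<^esub> x)"

datatype grp_variety = AllGroups | AbelianGroups | BooleanGroups

definition in_variety :: "grp_variety \<Rightarrow> 'g monoid \<Rightarrow> 'g topology \<Rightarrow> bool" where
  "in_variety V G T \<longleftrightarrow> topological_group G T \<and>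
     (case V of AllGroups \<Rightarrow> True
      | AbelianGroups \<Rightarrow> comm_group G
      | BooleanGroups \<Rightarrow> (\<forall>x\<in>carrier G. x \<otimes>\<^bsub>G\<^esub> x = \<one>\<^bsub>G\<^esub>))"

text \<open>The target groups are taken with carrier in the type 'a list; since this type can hold a
  copy of every Graev free group of X, this characterises the Graev free group up to
  topological isomorphism.\<close>
definition graev_free ::
  "grp_variety \<Rightarrow> 'a topology \<Rightarrow> 'a \<Rightarrow> 'g monoid \<Rightarrow> 'g topology \<Rightarrow> ('a \<Rightarrow> 'g) \<Rightarrow> bool" where
  "graev_free V X x0 G T i \<longleftrightarrow>
     in_variety V G T \<and> x0 \<in> topspace X \<and> embedding_map X T i \<and> i x0 = \<one>\<^bsub>G\<^esub> \<and>
     generate G (i ` topspace X) = carrier G \<and>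
     (\<forall>(H :: 'a list monoid) (S :: 'a list topology) f.
        in_variety V H S \<and> continuous_map X S f \<and> f x0 = \<one>\<^bsub>H\<^esub> \<longrightarrow>
        (\<exists>h. h \<in> hom G H \<and> continuous_map T S h \<and> (\<forall>x\<in>topspace X. h (i x) = f x)))"

text \<open>The quotient topology on G/N is
  the one making the projection x \<mapsto> N x a quotient map, so a group isomorphism
  psi : G/N \<rightarrow> H is a homeomorphism iff psi composed with the projection is a quotient map.\<close>
definition topological_quotient :: "'g monoid \<Rightarrow> 'g topology \<Rightarrow> 'h monoid \<Rightarrow> 'h topology \<Rightarrow> bool" where
  "topological_quotient G T H S \<longleftrightarrow>
     (\<exists>N. N \<lhd> G \<and> closedin T N \<and>
        (\<exists>\<psi>. \<psi> \<in> iso (G Mod N) H \<and> quotient_map T S (\<lambda>x. \<psi> (N #>\<^bsub>G\<^esub> x))))"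

end

theory Submission
  imports Defs
begin

lemma embedding_map_cont: "embedding_map X Y f \<Longrightarrow> continuous_map X Y f"
  unfolding embedding_map_def
  using homeomorphic_imp_continuous_map continuous_map_in_subtopology by blast

definition qtop :: "'a topology \<Rightarrow> ('a \<Rightarrow> 'b) \<Rightarrow> 'b topology" where
  "qtop X f = topology (\<lambda>U. U \<subseteq> f ` topspace X \<and> openin X {x \<in> topspace X. f x \<in> U})"

lemma istopology_qtop: "istopology (\<lambda>U. U \<subseteq> f ` topspace X \<and> openin X {x \<in> topspace X. f x \<in> U})"
  unfolding istopology_def
proof (rule conjI; intro allI impI)
  fix S T assume "S \<subseteq> f ` topspace X \<and> openin X {x \<in> topspace X. f x \<in> S}"
    "T \<subseteq> f ` topspace X \<and> openin X {x \<in> topspace X. f x \<in> T}"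
  moreover have "{x \<in> topspace X. f x \<in> S \<inter> T} = {x \<in> topspace X. f x \<in> S} \<inter> {x \<in> topspace X. f x \<in> T}" by auto
  ultimately show "S \<inter> T \<subseteq> f ` topspace X \<and> openin X {x \<in> topspace X. f x \<in> S \<inter> T}" by auto
next
  fix K assume K: "\<forall>S\<in>K. S \<subseteq> f ` topspace X \<and> openin X {x \<in> topspace X. f x \<in> S}"
  have eq: "{x \<in> topspace X. f x \<in> \<Union>K} = \<Union>((\<lambda>S. {x \<in> topspace X. f x \<in> S}) ` K)" by auto
  have o: "\<And>S. S \<in> K \<Longrightarrow> openin X {x \<in> topspace X. f x \<in> S}" using K by blast
  have B: "openin X (\<Union>((\<lambda>S. {x \<in> topspace X. f x \<in> S}) ` K))"
    by (rule openin_Union) (use o in blast)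
  have C: "\<Union>K \<subseteq> f ` topspace X" using K by blast
  show "\<Union>K \<subseteq> f ` topspace X \<and> openin X {x \<in> topspace X. f x \<in> \<Union>K}"
    using B C unfolding eq by (rule conjI[rotated])
qed

lemma openin_qtop: "openin (qtop X f) U \<longleftrightarrow> U \<subseteq> f ` topspace X \<and> openin X {x \<in> topspace X. f x \<in> U}"
  unfolding qtop_def by (simp add: istopology_qtop)

lemma topspace_qtop: "topspace (qtop X f) = f ` topspace X"
proof -
  have e: "{x \<in> topspace X. f x \<in> f ` topspace X} = topspace X" by auto
  have "openin (qtop X f) (f ` topspace X)" unfolding openin_qtop e by simp
  then have "f ` topspace X \<subseteq> topspace (qtop X f)" by (rule openin_subset)
  moreover have "topspace (qtop X f) \<subseteq> f ` topspace X"
    using openin_topspace[of "qtop X f"] unfolding openin_qtop by blast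
  ultimately show ?thesis by blast
qed

lemma quotient_map_qtop: "quotient_map X (qtop X f) f"
  unfolding quotient_map_def topspace_qtop openin_qtop by auto

lemma continuous_map_qtop: "continuous_map X (qtop X f) f"
  using quotient_map_qtop quotient_imp_continuous_map by blast

lemma open_map_prod:
  assumes "open_map X X' f" "open_map Y Y' g"
  shows "open_map (prod_topology X Y) (prod_topology X' Y') (\<lambda>(x,y). (f x, g y))"
  unfolding open_map_def openin_prod_topology_alt
proof (intro allI impI)
  fix S x' y'
  assume S: "\<forall>x y. (x, y) \<in> S \<longrightarrow> (\<exists>U V. openin X U \<and> openin Y V \<and> x \<in> U \<and> y \<in> V \<and> U \<times> V \<subseteq> S)"
    and xy: "(x', y') \<in> (\<lambda>(x, y). (f x, g y)) ` S"
  from xy obtain p where p: "p \<in> S" "(x', y') = (\<lambda>(x, y). (f x, g y)) p" by (rule imageE)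
  obtain x y where pxy: "p = (x,y)" by (cases p)
  with p have xyS: "(x,y) \<in> S" and "x' = f x" "y' = g y" by simp_all
  from S[rule_format, OF xyS] obtain U V where
    UV0: "openin X U \<and> openin Y V \<and> x \<in> U \<and> y \<in> V \<and> U \<times> V \<subseteq> S"
    by (elim exE) (erule that)
  then have UV: "openin X U" "openin Y V" "x \<in> U" "y \<in> V" "U \<times> V \<subseteq> S" by simp_all
  show "\<exists>U V. openin X' U \<and> openin Y' V \<and> x' \<in> U \<and> y' \<in> V \<and> U \<times> V \<subseteq> (\<lambda>(x, y). (f x, g y)) ` S"
  proof (intro exI conjI)
    show "openin X' (f ` U)" using assms(1) UV(1) unfolding open_map_def by blast
    show "openin Y' (g ` V)" using assms(2) UV(2) unfolding open_map_def by blast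
    show "x' \<in> f ` U" "y' \<in> g ` V" using UV \<open>x' = f x\<close> \<open>y' = g y\<close> by auto
    show "f ` U \<times> g ` V \<subseteq> (\<lambda>(x, y). (f x, g y)) ` S"
    proof (rule subsetI)
      fix z assume "z \<in> f ` U \<times> g ` V"
      then obtain a b where ab: "a \<in> U" "b \<in> V" "z = (f a, g b)" by blast
      then have "(a,b) \<in> S" using UV(5) by blast
      then show "z \<in> (\<lambda>(x, y). (f x, g y)) ` S" using ab(3) by (simp add: rev_image_eqI)
    qed
  qed
qed

lemma tg_group: "topological_group G T \<Longrightarrow> group G"
  unfolding topological_group_def by simp

lemma tg_topspace: "topological_group G T \<Longrightarrow> topspace T = carrier G"
  unfolding topological_group_def by simp

lemma tg_right_cont:
  assumes tg: "topological_group G T" and a: "a \<in> carrier G"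
  shows "continuous_map T T (\<lambda>x. x \<otimes>\<^bsub>G\<^esub> a)"
proof -
  have c1: "continuous_map T (prod_topology T T) (\<lambda>x. (x, a))"
    by (rule continuous_map_pairedI) (use a tg_topspace[OF tg] in auto)
  have c2: "continuous_map (prod_topology T T) T (\<lambda>p. fst p \<otimes>\<^bsub>G\<^esub> snd p)"
    using tg unfolding topological_group_def by simp
  have "continuous_map T T ((\<lambda>p. fst p \<otimes>\<^bsub>G\<^esub> snd p) \<circ> (\<lambda>x. (x, a)))"
    by (rule continuous_map_compose[OF c1 c2])
  then show ?thesis by (simp add: o_def)
qed

lemma tg_right_open:
  fixes G :: "'g monoid" (structure)
  assumes tg: "topological_group G T" and a: "a \<in> carrier G"
  shows "openin T Q \<Longrightarrow> openin T ((\<lambda>x. x \<otimes>\<^bsub>G\<^esub> a) ` Q)"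
proof -
  assume Q: "openin T Q"
  interpret group G using tg_group[OF tg] .
  have Osub: "Q \<subseteq> carrier G" using openin_subset[OF Q] tg_topspace[OF tg] by simp
  have ia: "inv a \<in> carrier G" using a by simp
  have eq: "(\<lambda>x. x \<otimes> a) ` Q = {y \<in> topspace T. y \<otimes> inv a \<in> Q}"
  proof (rule Set.set_eqI, rule iffI)
    fix y assume "y \<in> (\<lambda>x. x \<otimes> a) ` Q"
    then obtain x where x: "x \<in> Q" "y = x \<otimes> a" by (rule imageE)
    then have xc: "x \<in> carrier G" using Osub by (rule_tac subsetD) 
    have "y \<otimes> inv a = x" using x(2) xc a by (simp add: m_assoc)
    then show "y \<in> {y \<in> topspace T. y \<otimes> inv a \<in> Q}"
      using x xc a tg_topspace[OF tg] by simp
  next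
    fix y assume y: "y \<in> {y \<in> topspace T. y \<otimes> inv a \<in> Q}"
    then have yc: "y \<in> carrier G" using tg_topspace[OF tg] by simp
    have "y = (y \<otimes> inv a) \<otimes> a" using yc a by (simp add: m_assoc)
    then show "y \<in> (\<lambda>x. x \<otimes> a) ` Q" using y by (intro rev_image_eqI[of "y \<otimes> inv a"]) simp_all
  qed
  show ?thesis unfolding eq
    by (rule openin_continuous_map_preimage[OF tg_right_cont[OF tg ia] Q])
qed

lemma in_variety_tg: "in_variety V G T \<Longrightarrow> topological_group G T"
  unfolding in_variety_def by simp

lemma in_variety_retop:
  "in_variety V G T \<Longrightarrow> topological_group G S \<Longrightarrow> in_variety V G S"
  unfolding in_variety_def by simp

text \<open>Quotient group topology.\<close>

lemma qg_open_map:
  assumes tg: "topological_group G T" and gH: "group H" and hom: "\<Phi> \<in> hom G H"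
  shows "open_map T (qtop T \<Phi>) \<Phi>"
  unfolding open_map_def
proof (intro allI impI)
  fix Q assume Q: "openin T Q"
  interpret G: group G using tg_group[OF tg] .
  interpret gh: group_hom G H \<Phi> using gH hom by (simp add: group_hom_def group_hom_axioms_def G.is_group)
  have Osub: "Q \<subseteq> carrier G" using openin_subset[OF Q] tg_topspace[OF tg] by simp
  let ?K = "kernel G H \<Phi>"
  have eq: "{x \<in> topspace T. \<Phi> x \<in> \<Phi> ` Q} = (\<Union>n\<in>?K. (\<lambda>x. x \<otimes>\<^bsub>G\<^esub> n) ` Q)"
  proof (rule Set.set_eqI, rule iffI)
    fix x assume "x \<in> {x \<in> topspace T. \<Phi> x \<in> \<Phi> ` Q}"
    then have xc: "x \<in> carrier G" and "\<Phi> x \<in> \<Phi> ` Q" using tg_topspace[OF tg] by auto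
    then obtain q0 where q0: "q0 \<in> Q" "\<Phi> x = \<Phi> q0" by (auto elim: imageE)
    have oc: "q0 \<in> carrier G" using q0(1) Osub by (rule_tac subsetD)
    let ?n = "inv\<^bsub>G\<^esub> q0 \<otimes>\<^bsub>G\<^esub> x"
    have nc: "?n \<in> carrier G" using oc xc by simp
    have "\<Phi> ?n = inv\<^bsub>H\<^esub> (\<Phi> q0) \<otimes>\<^bsub>H\<^esub> \<Phi> x" using oc xc by simp
    also have "\<dots> = \<one>\<^bsub>H\<^esub>" using q0(2) oc by simp
    finally have "?n \<in> ?K" using nc unfolding kernel_def by simp
    moreover have "x = q0 \<otimes>\<^bsub>G\<^esub> ?n" using oc xc by (simp add: G.m_assoc[symmetric])
    ultimately show "x \<in> (\<Union>n\<in>?K. (\<lambda>x. x \<otimes>\<^bsub>G\<^esub> n) ` Q)" using q0(1) by blast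
  next
    fix x assume "x \<in> (\<Union>n\<in>?K. (\<lambda>x. x \<otimes>\<^bsub>G\<^esub> n) ` Q)"
    then obtain n q0 where n: "n \<in> ?K" and q0: "q0 \<in> Q" and x: "x = q0 \<otimes>\<^bsub>G\<^esub> n" by blast
    have oc: "q0 \<in> carrier G" using q0 Osub by (rule_tac subsetD)
    have nc: "n \<in> carrier G" and n1: "\<Phi> n = \<one>\<^bsub>H\<^esub>" using n unfolding kernel_def by auto
    have "\<Phi> x = \<Phi> q0" using x oc nc n1 by simp
    then show "x \<in> {x \<in> topspace T. \<Phi> x \<in> \<Phi> ` Q}" using x oc nc q0 tg_topspace[OF tg] by auto
  qed
  have "openin T (\<Union>n\<in>?K. (\<lambda>x. x \<otimes>\<^bsub>G\<^esub> n) ` Q)"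
  proof (rule openin_Union)
    fix S assume "S \<in> (\<lambda>n. (\<lambda>x. x \<otimes>\<^bsub>G\<^esub> n) ` Q) ` ?K"
    then obtain n where n: "n \<in> ?K" and S: "S = (\<lambda>x. x \<otimes>\<^bsub>G\<^esub> n) ` Q" by blast
    have "n \<in> carrier G" using n unfolding kernel_def by auto
    then show "openin T S" unfolding S by (rule tg_right_open[OF tg _ Q])
  qed
  moreover have "\<Phi> ` Q \<subseteq> \<Phi> ` topspace T" using openin_subset[OF Q] by (rule image_mono)
  ultimately show "openin (qtop T \<Phi>) (\<Phi> ` Q)" unfolding openin_qtop eq by simp
qed

lemma image_prod_pair: "(\<lambda>(x,y). (f x, g y)) ` (A \<times> B) = f ` A \<times> g ` B"
  by force

lemma qg_tg:
  assumes tg: "topological_group G T" and gH: "group H" and hom: "\<Phi> \<in> hom G H"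
    and surj: "\<Phi> ` carrier G = carrier H"
  shows "topological_group H (qtop T \<Phi>)"
proof -
  interpret G: group G using tg_group[OF tg] .
  interpret gh: group_hom G H \<Phi> using gH hom by (simp add: group_hom_def group_hom_axioms_def G.is_group)
  have tsT: "topspace T = carrier G" using tg_topspace[OF tg] .
  have ts: "topspace (qtop T \<Phi>) = carrier H" unfolding topspace_qtop tsT surj ..
  have om: "open_map T (qtop T \<Phi>) \<Phi>" by (rule qg_open_map[OF tg gH hom])
  have cq: "continuous_map T (qtop T \<Phi>) \<Phi>" by (rule continuous_map_qtop)
  have Q: "quotient_map (prod_topology T T) (prod_topology (qtop T \<Phi>) (qtop T \<Phi>)) (\<lambda>(x,y). (\<Phi> x, \<Phi> y))"
  proof (rule continuous_open_imp_quotient_map)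
    show "continuous_map (prod_topology T T) (prod_topology (qtop T \<Phi>) (qtop T \<Phi>)) (\<lambda>(x,y). (\<Phi> x, \<Phi> y))"
      using cq by (simp add: continuous_map_prod_top)
    show "open_map (prod_topology T T) (prod_topology (qtop T \<Phi>) (qtop T \<Phi>)) (\<lambda>(x,y). (\<Phi> x, \<Phi> y))"
      by (rule open_map_prod[OF om om])
    show "(\<lambda>(x,y). (\<Phi> x, \<Phi> y)) ` topspace (prod_topology T T) = topspace (prod_topology (qtop T \<Phi>) (qtop T \<Phi>))"
      unfolding topspace_prod_topology image_prod_pair topspace_qtop ..
  qed
  have cm: "continuous_map (prod_topology T T) T (\<lambda>p. fst p \<otimes>\<^bsub>G\<^esub> snd p)"
    using tg unfolding topological_group_def by simp
  have c1: "continuous_map (prod_topology T T) (qtop T \<Phi>) (\<Phi> \<circ> (\<lambda>p. fst p \<otimes>\<^bsub>G\<^esub> snd p))"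
    by (rule continuous_map_compose[OF cm cq])
  have c2: "continuous_map (prod_topology T T) (qtop T \<Phi>) ((\<lambda>p. fst p \<otimes>\<^bsub>H\<^esub> snd p) \<circ> (\<lambda>(x,y). (\<Phi> x, \<Phi> y)))"
  proof (rule continuous_map_eq[OF c1])
    fix p assume "p \<in> topspace (prod_topology T T)"
    then obtain a b where p: "p = (a,b)" "a \<in> carrier G" "b \<in> carrier G"
      unfolding topspace_prod_topology tsT by (cases p) simp
    show "(\<Phi> \<circ> (\<lambda>p. fst p \<otimes>\<^bsub>G\<^esub> snd p)) p = ((\<lambda>p. fst p \<otimes>\<^bsub>H\<^esub> snd p) \<circ> (\<lambda>(x,y). (\<Phi> x, \<Phi> y))) p"
      using p by simp
  qed
  have multc: "continuous_map (prod_topology (qtop T \<Phi>) (qtop T \<Phi>)) (qtop T \<Phi>) (\<lambda>p. fst p \<otimes>\<^bsub>H\<^esub> snd p)"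
    by (rule continuous_compose_quotient_map[OF Q c2])
  have ci: "continuous_map T T (\<lambda>x. inv\<^bsub>G\<^esub> x)"
    using tg unfolding topological_group_def by simp
  have c3: "continuous_map T (qtop T \<Phi>) (\<Phi> \<circ> (\<lambda>x. inv\<^bsub>G\<^esub> x))"
    by (rule continuous_map_compose[OF ci cq])
  have c4: "continuous_map T (qtop T \<Phi>) ((\<lambda>x. inv\<^bsub>H\<^esub> x) \<circ> \<Phi>)"
  proof (rule continuous_map_eq[OF c3])
    fix x assume "x \<in> topspace T"
    then have "x \<in> carrier G" using tsT by simp
    then show "(\<Phi> \<circ> (\<lambda>x. inv\<^bsub>G\<^esub> x)) x = ((\<lambda>x. inv\<^bsub>H\<^esub> x) \<circ> \<Phi>) x" by simp
  qed
  have invc: "continuous_map (qtop T \<Phi>) (qtop T \<Phi>) (\<lambda>x. inv\<^bsub>H\<^esub> x)"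
    by (rule continuous_compose_quotient_map[OF quotient_map_qtop c4])
  show ?thesis unfolding topological_group_def using gH ts multc invc by simp
qed

text \<open>Transport of a topological group along an injection.\<close>

definition tr_grp :: "('b \<Rightarrow> 'c) \<Rightarrow> 'b monoid \<Rightarrow> 'c monoid" where
  "tr_grp e G = \<lparr>carrier = e ` carrier G, monoid.mult = (\<lambda>a b. e (inv_into UNIV e a \<otimes>\<^bsub>G\<^esub> inv_into UNIV e b)), one = e \<one>\<^bsub>G\<^esub>\<rparr>"

definition tr_top :: "('b \<Rightarrow> 'c) \<Rightarrow> 'b monoid \<Rightarrow> 'b topology \<Rightarrow> 'c topology" where
  "tr_top e G T = pullback_topology (e ` carrier G) (inv_into UNIV e) T"

lemma tr_grp_simps:
  "carrier (tr_grp e G) = e ` carrier G"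
  "a \<otimes>\<^bsub>tr_grp e G\<^esub> b = e (inv_into UNIV e a \<otimes>\<^bsub>G\<^esub> inv_into UNIV e b)"
  "\<one>\<^bsub>tr_grp e G\<^esub> = e \<one>\<^bsub>G\<^esub>"
  unfolding tr_grp_def by simp_all

lemma tr_group:
  assumes gG: "group G" and inj: "inj e"
  shows "group (tr_grp e G)" "e \<in> hom G (tr_grp e G)" "inv_into UNIV e \<in> hom (tr_grp e G) G"
proof -
  interpret G: group G by (rule gG)
  have de: "\<And>x. inv_into UNIV e (e x) = x" using inj by (simp add: inv_into_f_f)
  show grp: "group (tr_grp e G)"
  proof (rule groupI)
    fix x y assume "x \<in> carrier (tr_grp e G)" "y \<in> carrier (tr_grp e G)"
    then show "x \<otimes>\<^bsub>tr_grp e G\<^esub> y \<in> carrier (tr_grp e G)"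
      by (auto simp: tr_grp_simps de)
  next
    show "\<one>\<^bsub>tr_grp e G\<^esub> \<in> carrier (tr_grp e G)" by (simp add: tr_grp_simps)
  next
    fix x y z assume "x \<in> carrier (tr_grp e G)" "y \<in> carrier (tr_grp e G)" "z \<in> carrier (tr_grp e G)"
    then show "x \<otimes>\<^bsub>tr_grp e G\<^esub> y \<otimes>\<^bsub>tr_grp e G\<^esub> z = x \<otimes>\<^bsub>tr_grp e G\<^esub> (y \<otimes>\<^bsub>tr_grp e G\<^esub> z)"
      by (auto simp: tr_grp_simps de G.m_assoc)
  next
    fix x assume "x \<in> carrier (tr_grp e G)"
    then show "\<one>\<^bsub>tr_grp e G\<^esub> \<otimes>\<^bsub>tr_grp e G\<^esub> x = x"
      by (auto simp: tr_grp_simps de)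
  next
    fix x assume "x \<in> carrier (tr_grp e G)"
    then obtain a where a: "a \<in> carrier G" "x = e a" by (auto simp: tr_grp_simps)
    show "\<exists>y \<in> carrier (tr_grp e G). y \<otimes>\<^bsub>tr_grp e G\<^esub> x = \<one>\<^bsub>tr_grp e G\<^esub>"
      by (rule bexI[of _ "e (inv\<^bsub>G\<^esub> a)"]) (use a in \<open>simp_all add: tr_grp_simps de\<close>)
  qed
  show "e \<in> hom G (tr_grp e G)"
    by (rule homI) (simp_all add: tr_grp_simps de)
  show "inv_into UNIV e \<in> hom (tr_grp e G) G"
    by (rule homI) (auto simp: tr_grp_simps de)
qed

lemma tr_comm:
  assumes cG: "comm_group G" and inj: "inj e"
  shows "comm_group (tr_grp e G)"
proof -
  have gG: "group G" using cG by (rule comm_group.axioms(2))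
  have de: "\<And>x. inv_into UNIV e (e x) = x" using inj by (simp add: inv_into_f_f)
  have g': "group (tr_grp e G)" by (rule tr_group(1)[OF gG inj])
  show ?thesis
  proof (rule group.group_comm_groupI[OF g'])
    fix x y assume x: "x \<in> carrier (tr_grp e G)" and y: "y \<in> carrier (tr_grp e G)"
    from x obtain a where a: "a \<in> carrier G" "x = e a" unfolding tr_grp_simps by (rule imageE)
    from y obtain b where b: "b \<in> carrier G" "y = e b" unfolding tr_grp_simps by (rule imageE)
    have ab: "a \<otimes>\<^bsub>G\<^esub> b = b \<otimes>\<^bsub>G\<^esub> a" by (rule comm_groupE(4)[OF cG a(1) b(1)])
    have "x \<otimes>\<^bsub>tr_grp e G\<^esub> y = e (a \<otimes>\<^bsub>G\<^esub> b)" unfolding tr_grp_simps a(2) b(2) de ..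
    also have "\<dots> = e (b \<otimes>\<^bsub>G\<^esub> a)" unfolding ab ..
    also have "\<dots> = y \<otimes>\<^bsub>tr_grp e G\<^esub> x" unfolding tr_grp_simps a(2) b(2) de ..
    finally show "x \<otimes>\<^bsub>tr_grp e G\<^esub> y = y \<otimes>\<^bsub>tr_grp e G\<^esub> x" .
  qed
qed

lemma tr_bool:
  assumes bG: "\<forall>x\<in>carrier G. x \<otimes>\<^bsub>G\<^esub> x = \<one>\<^bsub>G\<^esub>" and inj: "inj e"
  shows "\<forall>x\<in>carrier (tr_grp e G). x \<otimes>\<^bsub>tr_grp e G\<^esub> x = \<one>\<^bsub>tr_grp e G\<^esub>"
proof
  have de: "\<And>x. inv_into UNIV e (e x) = x" using inj by (simp add: inv_into_f_f)
  fix x assume "x \<in> carrier (tr_grp e G)"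
  then obtain a where a: "a \<in> carrier G" "x = e a" unfolding tr_grp_simps by (rule imageE)
  have aa: "a \<otimes>\<^bsub>G\<^esub> a = \<one>\<^bsub>G\<^esub>" using bG a(1) by (rule bspec)
  show "x \<otimes>\<^bsub>tr_grp e G\<^esub> x = \<one>\<^bsub>tr_grp e G\<^esub>"
    unfolding tr_grp_simps a(2) de aa ..
qed

lemma tr_variety:
  assumes V: "in_variety V G T" and inj: "inj e"
  shows "in_variety V (tr_grp e G) (tr_top e G T)"
    and "continuous_map T (tr_top e G T) e"
    and "continuous_map (tr_top e G T) T (inv_into UNIV e)"
proof -
  have tg: "topological_group G T" using V by (rule in_variety_tg)
  have gG: "group G" using tg by (rule tg_group)
  interpret G: group G by (rule gG)
  have tsT: "topspace T = carrier G" using tg_topspace[OF tg] .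
  have de: "\<And>x. inv_into UNIV e (e x) = x" using inj by (simp add: inv_into_f_f)
  note tr = tr_group[OF gG inj]
  interpret G': group "tr_grp e G" by (rule tr(1))
  interpret eh: group_hom G "tr_grp e G" e using tr by (simp add: group_hom_def group_hom_axioms_def G.is_group)
  have ts': "topspace (tr_top e G T) = e ` carrier G"
    unfolding tr_top_def topspace_pullback_topology tsT by (auto simp: de)
  have cd: "continuous_map (tr_top e G T) T (inv_into UNIV e)"
    unfolding tr_top_def using continuous_map_pullback[OF continuous_map_id, of "e ` carrier G" "inv_into UNIV e"]
    by (simp add: o_def)
  show "continuous_map (tr_top e G T) T (inv_into UNIV e)" by (rule cd)
  have ce: "continuous_map T (tr_top e G T) e"
    unfolding tr_top_def
  proof (rule continuous_map_pullback')
    show "continuous_map T T (inv_into UNIV e \<circ> e)" by (simp add: o_def de)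
    show "topspace T \<subseteq> e -` (e ` carrier G)" using tsT by auto
  qed
  show "continuous_map T (tr_top e G T) e" by (rule ce)
  have cm: "continuous_map (prod_topology T T) T (\<lambda>p. fst p \<otimes>\<^bsub>G\<^esub> snd p)"
    using tg unfolding topological_group_def by simp
  have cdd: "continuous_map (prod_topology (tr_top e G T) (tr_top e G T)) (prod_topology T T) (\<lambda>(x,y). (inv_into UNIV e x, inv_into UNIV e y))"
    using cd by (simp add: continuous_map_prod_top)
  have c1: "continuous_map (prod_topology (tr_top e G T) (tr_top e G T)) (tr_top e G T)
      (e \<circ> ((\<lambda>p. fst p \<otimes>\<^bsub>G\<^esub> snd p) \<circ> (\<lambda>(x,y). (inv_into UNIV e x, inv_into UNIV e y))))"
    by (rule continuous_map_compose[OF continuous_map_compose[OF cdd cm] ce])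
  have multc: "continuous_map (prod_topology (tr_top e G T) (tr_top e G T)) (tr_top e G T)
      (\<lambda>p. fst p \<otimes>\<^bsub>tr_grp e G\<^esub> snd p)"
  proof (rule continuous_map_eq[OF c1])
    fix p
    show "(e \<circ> ((\<lambda>p. fst p \<otimes>\<^bsub>G\<^esub> snd p) \<circ> (\<lambda>(x,y). (inv_into UNIV e x, inv_into UNIV e y)))) p = fst p \<otimes>\<^bsub>tr_grp e G\<^esub> snd p"
      by (cases p) (simp add: tr_grp_simps)
  qed
  have ci: "continuous_map T T (\<lambda>x. inv\<^bsub>G\<^esub> x)"
    using tg unfolding topological_group_def by simp
  have c2: "continuous_map (tr_top e G T) (tr_top e G T) (e \<circ> ((\<lambda>x. inv\<^bsub>G\<^esub> x) \<circ> inv_into UNIV e))"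
    by (rule continuous_map_compose[OF continuous_map_compose[OF cd ci] ce])
  have invc: "continuous_map (tr_top e G T) (tr_top e G T) (\<lambda>x. inv\<^bsub>tr_grp e G\<^esub> x)"
  proof (rule continuous_map_eq[OF c2])
    fix x assume "x \<in> topspace (tr_top e G T)"
    then obtain a where a: "a \<in> carrier G" "x = e a" using ts' by auto
    show "(e \<circ> ((\<lambda>x. inv\<^bsub>G\<^esub> x) \<circ> inv_into UNIV e)) x = inv\<^bsub>tr_grp e G\<^esub> x"
      using a by (simp add: de eh.hom_inv)
  qed
  have tg': "topological_group (tr_grp e G) (tr_top e G T)"
    unfolding topological_group_def using tr(1) ts' multc invc by (simp add: tr_grp_simps)
  have alg: "(case V of AllGroups \<Rightarrow> True
      | AbelianGroups \<Rightarrow> comm_group (tr_grp e G)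
      | BooleanGroups \<Rightarrow> (\<forall>x\<in>carrier (tr_grp e G). x \<otimes>\<^bsub>tr_grp e G\<^esub> x = \<one>\<^bsub>tr_grp e G\<^esub>))"
  proof (cases V)
    case AllGroups then show ?thesis by simp
  next
    case AbelianGroups
    then have cG: "comm_group G" using V unfolding in_variety_def by simp
    show ?thesis using tr_comm[OF cG inj] AbelianGroups by simp
  next
    case BooleanGroups
    then have bG: "\<forall>x\<in>carrier G. x \<otimes>\<^bsub>G\<^esub> x = \<one>\<^bsub>G\<^esub>" using V unfolding in_variety_def by simp
    show ?thesis using tr_bool[OF bG inj] BooleanGroups by simp
  qed
  show "in_variety V (tr_grp e G) (tr_top e G T)"
    unfolding in_variety_def using tg' alg by simp
qed

text \<open>The countable space Y.\<close>

definition gfun :: "(nat \<Rightarrow> 'a set) \<Rightarrow> 'a \<Rightarrow> nat" where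
  "gfun U x = (if x \<in> (\<Inter>n. U n) then 0 else Suc (LEAST n. x \<notin> U n))"

lemma gfun_0_iff: "gfun U x = 0 \<longleftrightarrow> x \<in> (\<Inter>n. U n)"
  unfolding gfun_def by simp

lemma gfun_Suc_iff: "gfun U x = Suc k \<longleftrightarrow> x \<notin> U k \<and> (\<forall>m<k. x \<in> U m)"
proof (cases "x \<in> (\<Inter>n. U n)")
  case True
  then show ?thesis unfolding gfun_def by simp
next
  case False
  then have ex: "\<exists>n. x \<notin> U n" by simp
  have "(LEAST n. x \<notin> U n) = k \<longleftrightarrow> x \<notin> U k \<and> (\<forall>m<k. x \<in> U m)"
  proof
    assume k: "(LEAST n. x \<notin> U n) = k"
    have "x \<notin> U (LEAST n. x \<notin> U n)" using ex by (rule LeastI_ex)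
    moreover have "\<forall>m<k. x \<in> U m"
    proof (intro allI impI)
      fix m assume "m < k"
      then have "m < (LEAST n. x \<notin> U n)" using k by simp
      then show "x \<in> U m" using not_less_Least by blast
    qed
    ultimately show "x \<notin> U k \<and> (\<forall>m<k. x \<in> U m)" using k by simp
  next
    assume k: "x \<notin> U k \<and> (\<forall>m<k. x \<in> U m)"
    show "(LEAST n. x \<notin> U n) = k"
    proof (rule Least_equality)
      show "x \<notin> U k" using k by simp
      fix y assume "x \<notin> U y"
      then show "k \<le> y" using k by (meson not_less)
    qed
  qed
  then show ?thesis using False unfolding gfun_def by simp
qed

lemma gfun_piece:
  assumes dec: "\<And>n. U (Suc n) \<subseteq> U n"
  shows "{x \<in> topspace X. gfun U x = Suc k} =
     (if k = 0 then topspace X - U 0 else (topspace X \<inter> U (k - 1)) - U k)"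
proof -
  have "(\<forall>m<k. x \<in> U m) \<longleftrightarrow> (k = 0 \<or> x \<in> U (k - 1))" for x
  proof
    assume "\<forall>m<k. x \<in> U m" then show "k = 0 \<or> x \<in> U (k - 1)" by (cases k) auto
  next
    assume h: "k = 0 \<or> x \<in> U (k - 1)"
    show "\<forall>m<k. x \<in> U m"
    proof (intro allI impI)
      fix m assume mk: "m < k"
      then have "k \<noteq> 0" by simp
      then have xk: "x \<in> U (k - 1)" using h by simp
      have "U (k - 1) \<subseteq> U m" using mk by (intro lift_Suc_antimono_le[of U, OF dec]) simp
      then show "x \<in> U m" using xk by (rule subsetD)
    qed
  qed
  then show ?thesis unfolding gfun_Suc_iff by auto
qed

lemma gfun_piece_clopen:
  assumes cl: "\<And>n. openin X (U n) \<and> closedin X (U n)" and dec: "\<And>n. U (Suc n) \<subseteq> U n"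
  shows "openin X {x \<in> topspace X. gfun U x = Suc k}" "closedin X {x \<in> topspace X. gfun U x = Suc k}"
proof -
  have o: "\<And>n. openin X (U n)" and c: "\<And>n. closedin X (U n)" using cl by simp_all
  have sub: "\<And>n. topspace X \<inter> U n = U n" using openin_subset[OF o] by blast
  show "openin X {x \<in> topspace X. gfun U x = Suc k}"
    unfolding gfun_piece[of U, OF dec] sub
    using openin_diff[OF openin_topspace c] openin_diff[OF o c] by simp
  show "closedin X {x \<in> topspace X. gfun U x = Suc k}"
    unfolding gfun_piece[of U, OF dec] sub
    using closedin_diff[OF closedin_topspace o] closedin_diff[OF c o] by simp
qed

lemma Y_open:
  assumes cl: "\<And>n. openin X (U n) \<and> closedin X (U n)" and dec: "\<And>n. U (Suc n) \<subseteq> U n"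
    and W: "W \<subseteq> gfun U ` topspace X" and fin: "0 \<in> W \<Longrightarrow> finite (gfun U ` topspace X - W)"
  shows "openin (qtop X (gfun U)) W"
proof -
  let ?g = "gfun U"
  let ?P = "\<lambda>k. {x \<in> topspace X. ?g x = Suc k}"
  have "openin X {x \<in> topspace X. ?g x \<in> W}"
  proof (cases "0 \<in> W")
    case False
    have eq: "{x \<in> topspace X. ?g x \<in> W} = \<Union>(?P ` {k. Suc k \<in> W})"
    proof (rule Set.set_eqI, rule iffI)
      fix x assume x: "x \<in> {x \<in> topspace X. ?g x \<in> W}"
      then have "?g x \<noteq> 0" using False by (metis (mono_tags, lifting) mem_Collect_eq)
      then obtain k where k: "?g x = Suc k" using not0_implies_Suc by blast
      then show "x \<in> \<Union>(?P ` {k. Suc k \<in> W})" using x by auto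
    next
      fix x assume "x \<in> \<Union>(?P ` {k. Suc k \<in> W})"
      then show "x \<in> {x \<in> topspace X. ?g x \<in> W}" by auto
    qed
    show ?thesis unfolding eq
      by (rule openin_Union) (use gfun_piece_clopen(1)[of X U, OF cl dec] in blast)
  next
    case True
    let ?F = "{k. Suc k \<in> ?g ` topspace X - W}"
    have finF: "finite ?F"
    proof -
      have "?F = Suc -` (?g ` topspace X - W)" by auto
      then show ?thesis using finite_vimageI[OF fin[OF True] inj_Suc] by simp
    qed
    have eq: "{x \<in> topspace X. ?g x \<in> W} = topspace X - \<Union>(?P ` ?F)"
    proof (rule Set.set_eqI, rule iffI)
      fix x assume x: "x \<in> {x \<in> topspace X. ?g x \<in> W}"
      then show "x \<in> topspace X - \<Union>(?P ` ?F)" by auto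
    next
      fix x assume x: "x \<in> topspace X - \<Union>(?P ` ?F)"
      then have xt: "x \<in> topspace X" by simp
      show "x \<in> {x \<in> topspace X. ?g x \<in> W}"
      proof (cases "?g x")
        case 0 then show ?thesis using True xt by simp
      next
        case (Suc k)
        then have "k \<notin> ?F" using x by auto
        moreover have "Suc k \<in> ?g ` topspace X" using Suc xt by (metis image_eqI)
        ultimately show ?thesis using Suc xt by auto
      qed
    qed
    have "closedin X (\<Union>(?P ` ?F))"
      by (rule closedin_Union) (use finF gfun_piece_clopen(2)[of X U, OF cl dec] in auto)
    then show ?thesis unfolding eq by (rule openin_diff[OF openin_topspace])
  qed
  then show ?thesis unfolding openin_qtop using W by simp
qed

lemma Y_closed:
  assumes cl: "\<And>n. openin X (U n) \<and> closedin X (U n)" and dec: "\<And>n. U (Suc n) \<subseteq> U n"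
    and W: "W \<subseteq> topspace (qtop X (gfun U))" and W0: "0 \<in> W"
  shows "closedin (qtop X (gfun U)) W"
proof -
  have "openin (qtop X (gfun U)) (topspace (qtop X (gfun U)) - W)"
    by (rule Y_open[of X U, OF cl dec]) (use W0 in \<open>auto simp: topspace_qtop\<close>)
  then show ?thesis unfolding closedin_def using W by simp
qed

lemma Y_single_clopen:
  assumes cl: "\<And>n. openin X (U n) \<and> closedin X (U n)" and dec: "\<And>n. U (Suc n) \<subseteq> U n"
    and a: "a \<in> topspace (qtop X (gfun U))" "a \<noteq> 0"
  shows "openin (qtop X (gfun U)) {a}" "openin (qtop X (gfun U)) (topspace (qtop X (gfun U)) - {a})"
proof -
  show "openin (qtop X (gfun U)) {a}"
    by (rule Y_open[of X U, OF cl dec]) (use a in \<open>auto simp: topspace_qtop\<close>)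
  show "openin (qtop X (gfun U)) (topspace (qtop X (gfun U)) - {a})"
  proof (rule Y_open[of X U, OF cl dec])
    show "topspace (qtop X (gfun U)) - {a} \<subseteq> gfun U ` topspace X" by (auto simp: topspace_qtop)
    have "gfun U ` topspace X - (topspace (qtop X (gfun U)) - {a}) \<subseteq> {a}" by (auto simp: topspace_qtop)
    then show "finite (gfun U ` topspace X - (topspace (qtop X (gfun U)) - {a}))"
      by (rule finite_subset) simp
  qed
qed

lemma Y_props:
  assumes cl: "\<And>n. openin X (U n) \<and> closedin X (U n)" and dec: "\<And>n. U (Suc n) \<subseteq> U n"
    and ne: "(\<Inter>n. U n) \<noteq> {}" and no: "\<not> openin X (\<Inter>n. U n)"
  shows "tychonoff_space (qtop X (gfun U))" "countable (topspace (qtop X (gfun U)))"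
    "0 \<in> topspace (qtop X (gfun U))" "\<not> openin (qtop X (gfun U)) {0}"
proof -
  let ?Y = "qtop X (gfun U)"
  let ?T = "topspace ?Y"
  have CX: "(\<Inter>n. U n) \<subseteq> topspace X" using openin_subset cl by blast
  obtain c where c: "c \<in> (\<Inter>n. U n)" using ne by blast
  have "gfun U c = 0" using c by (simp add: gfun_0_iff)
  then show T0: "0 \<in> ?T" unfolding topspace_qtop using c CX by (metis image_eqI subsetD)
  show "countable ?T" by simp
  have eqC: "{x \<in> topspace X. gfun U x \<in> {0}} = (\<Inter>n. U n)" using CX by (auto simp: gfun_0_iff)
  show "\<not> openin ?Y {0}" unfolding openin_qtop eqC using no by simp
  have H: "Hausdorff_space ?Y"
    unfolding Hausdorff_space_def
  proof (intro allI impI)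
    fix x y assume xy: "x \<in> ?T \<and> y \<in> ?T \<and> x \<noteq> y"
    show "\<exists>U' V. openin ?Y U' \<and> openin ?Y V \<and> x \<in> U' \<and> y \<in> V \<and> disjnt U' V"
    proof (cases "x = 0")
      case False
      show ?thesis
        by (rule exI[of _ "{x}"], rule exI[of _ "?T - {x}"])
          (use xy False Y_single_clopen[of X U x, OF cl dec] in \<open>auto simp: disjnt_def\<close>)
    next
      case True
      then have "y \<noteq> 0" using xy by simp
      show ?thesis
        by (rule exI[of _ "?T - {y}"], rule exI[of _ "{y}"])
          (use xy \<open>y \<noteq> 0\<close> Y_single_clopen[of X U y, OF cl dec] in \<open>auto simp: disjnt_def\<close>)
    qed
  qed
  have CR: "completely_regular_space ?Y"
    unfolding completely_regular_space_def
  proof (intro allI impI)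
    fix S x assume Sx: "closedin ?Y S \<and> x \<in> ?T - S"
    define K where "K = (if x = 0 then ?T - S else {x})"
    have KT: "K \<subseteq> ?T" using Sx unfolding K_def by auto
    have xK: "x \<in> K" using Sx unfolding K_def by auto
    have KS: "K \<inter> S = {}" using Sx unfolding K_def by auto
    have Ko: "openin ?Y K"
    proof (cases "x = 0")
      case True then show ?thesis unfolding K_def using Sx by (simp add: openin_diff)
    next
      case False then show ?thesis unfolding K_def using Sx Y_single_clopen[of X U x, OF cl dec] by simp
    qed
    have Kc: "closedin ?Y K"
    proof (cases "x = 0")
      case True then show ?thesis unfolding K_def using Sx KT
        by (intro Y_closed[of X U, OF cl dec]) (auto simp: K_def)
    next
      case False
      then have o: "openin ?Y (?T - {x})" using Sx Y_single_clopen[of X U x, OF cl dec] by simp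
      have "K = {x}" using False by (simp add: K_def)
      then show ?thesis unfolding closedin_def using Sx o by simp
    qed
    have Kco: "openin ?Y (?T - K)" using Kc unfolding closedin_def by simp
    define f where "f = (\<lambda>z. if z \<in> K then (0::real) else 1)"
    have "continuous_map ?Y (top_of_set {0..1}) f"
      unfolding continuous_map_def
    proof (intro conjI allI impI)
      show "f \<in> ?T \<rightarrow> topspace (top_of_set {0..1})" unfolding f_def by auto
      fix V :: "real set" assume "openin (top_of_set {0..1}) V"
      have eq: "{z \<in> ?T. f z \<in> V} = (if (0::real) \<in> V then K else {}) \<union> (if (1::real) \<in> V then ?T - K else {})"
        unfolding f_def using KT by auto
      show "openin ?Y {z \<in> ?T. f z \<in> V}" unfolding eq using Ko Kco by auto
    qed
    moreover have "f x = 0" unfolding f_def using xK by simp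
    moreover have "f ` S \<subseteq> {1}" unfolding f_def using KS by auto
    ultimately show "\<exists>f::_\<Rightarrow>real. continuous_map ?Y (top_of_set {0..1}) f \<and> f x = 0 \<and> f ` S \<subseteq> {1}"
      by blast
  qed
  show "tychonoff_space ?Y" unfolding tychonoff_space_def using H CR by simp
qed

lemma hom_fix_generate:
  assumes gG: "group G" and h: "h \<in> hom G G" and S: "S \<subseteq> carrier G" and fx: "\<And>s. s \<in> S \<Longrightarrow> h s = s"
    and w: "w \<in> generate G S"
  shows "h w = w"
  using w
proof (induction rule: generate.induct)
  interpret G: group G by (rule gG)
  interpret gh: group_hom G G h using h by (simp add: group_hom_def group_hom_axioms_def G.is_group)
  case one show ?case by simp
next
  case (incl s) then show ?case by (rule fx)
next
  interpret G: group G by (rule gG)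
  interpret gh: group_hom G G h using h by (simp add: group_hom_def group_hom_axioms_def G.is_group)
  case (inv s)
  then have "s \<in> carrier G" using S by blast
  then show ?case using fx[OF inv] by simp
next
  interpret G: group G by (rule gG)
  interpret gh: group_hom G G h using h by (simp add: group_hom_def group_hom_axioms_def G.is_group)
  case (eng a b)
  have "a \<in> carrier G" "b \<in> carrier G" using eng(1,2) G.generate_in_carrier[OF S] by auto
  then show ?case using eng(3,4) by simp
qed

lemma generate_finite:
  assumes gG: "group G" and w: "w \<in> generate G S"
  shows "\<exists>F. finite F \<and> F \<subseteq> S \<and> w \<in> generate G F"
  using w
proof (induction rule: generate.induct)
  case one then show ?case by (intro exI[of _ "{}"]) (simp add: generate.one)
next
  case (incl s) then show ?case by (intro exI[of _ "{s}"]) (simp add: generate.incl)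
next
  case (inv s) then show ?case by (intro exI[of _ "{s}"]) (simp add: generate.inv)
next
  case (eng a b)
  obtain F1 where F1: "finite F1" "F1 \<subseteq> S" "a \<in> generate G F1" using eng(3) by blast
  obtain F2 where F2: "finite F2" "F2 \<subseteq> S" "b \<in> generate G F2" using eng(4) by blast
  have "generate G F1 \<subseteq> generate G (F1 \<union> F2)" "generate G F2 \<subseteq> generate G (F1 \<union> F2)"
    using group.mono_generate[OF gG] by auto
  then have "a \<otimes>\<^bsub>G\<^esub> b \<in> generate G (F1 \<union> F2)" using F1(3) F2(3) by (auto intro: generate.eng)
  then show ?case using F1 F2 by (intro exI[of _ "F1 \<union> F2"]) simp
qed

lemma graev_free_D:
  fixes X :: "'a topology"
  assumes "graev_free V X x0 G T i"
  shows "in_variety V G T" "x0 \<in> topspace X" "embedding_map X T i" "i x0 = \<one>\<^bsub>G\<^esub>"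
    "generate G (i ` topspace X) = carrier G"
    "\<And>(H :: 'a list monoid) (S :: 'a list topology) f.
        in_variety V H S \<Longrightarrow> continuous_map X S f \<Longrightarrow> f x0 = \<one>\<^bsub>H\<^esub> \<Longrightarrow>
        (\<exists>h. h \<in> hom G H \<and> continuous_map T S h \<and> (\<forall>x\<in>topspace X. h (i x) = f x))"
  using assms unfolding graev_free_def by blast+

lemma discrete_tg:
  assumes "group G"
  shows "topological_group G (discrete_topology (carrier G))"
proof -
  interpret G: group G by (rule assms)
  have "continuous_map (discrete_topology (carrier G \<times> carrier G)) (discrete_topology (carrier G)) (\<lambda>p. fst p \<otimes>\<^bsub>G\<^esub> snd p)"
    by auto
  then have "continuous_map (prod_topology (discrete_topology (carrier G)) (discrete_topology (carrier G))) (discrete_topology (carrier G)) (\<lambda>p. fst p \<otimes>\<^bsub>G\<^esub> snd p)"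
    by (simp add: prod_topology_discrete_topology)
  then show ?thesis unfolding topological_group_def using assms by auto
qed

lemma free_T1:
  fixes Y :: "'a topology" and G :: "'a list monoid"
  assumes gf: "graev_free V Y y0 G T i"
    and sep: "\<And>F. finite F \<Longrightarrow> F \<subseteq> topspace Y \<Longrightarrow>
       \<exists>f. continuous_map Y (discrete_topology (carrier G)) f \<and> f y0 = \<one>\<^bsub>G\<^esub> \<and> (\<forall>y\<in>F. f y = i y)"
  shows "closedin T {\<one>\<^bsub>G\<^esub>}"
proof -
  note D = graev_free_D[OF gf]
  have tg: "topological_group G T" using D(1) by (rule in_variety_tg)
  have gG: "group G" using tg by (rule tg_group)
  interpret G: group G by (rule gG)
  have tsT: "topspace T = carrier G" using tg_topspace[OF tg] .
  have ic: "continuous_map Y T i" using D(3) by (rule embedding_map_cont)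
  have iS: "i ` topspace Y \<subseteq> carrier G" using continuous_map_image_subset_topspace[OF ic] tsT by simp
  have Vd: "in_variety V G (discrete_topology (carrier G))"
    by (rule in_variety_retop[OF D(1) discrete_tg[OF gG]])
  have "openin T (topspace T - {\<one>\<^bsub>G\<^esub>})"
    unfolding openin_subopen[of T "topspace T - {\<one>\<^bsub>G\<^esub>}"]
  proof
    fix w assume w: "w \<in> topspace T - {\<one>\<^bsub>G\<^esub>}"
    then have "w \<in> generate G (i ` topspace Y)" using D(5) tsT by simp
    then obtain F0 where F0: "finite F0" "F0 \<subseteq> i ` topspace Y" "w \<in> generate G F0"
      using generate_finite[OF gG] by blast
    obtain F where F: "F \<subseteq> topspace Y" "finite F" "F0 = i ` F"
      using finite_subset_image[OF F0(1) F0(2)] by blast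
    obtain f where f: "continuous_map Y (discrete_topology (carrier G)) f" "f y0 = \<one>\<^bsub>G\<^esub>" "\<forall>y\<in>F. f y = i y"
      using sep[OF F(2) F(1)] by blast
    obtain h where h: "h \<in> hom G G" "continuous_map T (discrete_topology (carrier G)) h"
      "\<forall>y\<in>topspace Y. h (i y) = f y"
      using D(6)[OF Vd f(1) f(2)] by blast
    have hw: "h w = w"
    proof (rule hom_fix_generate[OF gG h(1) _ _ F0(3)])
      show "F0 \<subseteq> carrier G" using F0(2) iS by blast
      fix s assume "s \<in> F0"
      then obtain y where y: "y \<in> F" "s = i y" using F(3) by blast
      then show "h s = s" using h(3) f(3) F(1) by auto
    qed
    interpret gh: group_hom G G h using h(1) by (simp add: group_hom_def group_hom_axioms_def G.is_group)
    let ?O = "{x \<in> topspace T. h x \<in> carrier G - {\<one>\<^bsub>G\<^esub>}}"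
    have "openin T ?O"
      by (rule openin_continuous_map_preimage[OF h(2)]) simp
    moreover have "w \<in> ?O" using w hw tsT by simp
    moreover have "?O \<subseteq> topspace T - {\<one>\<^bsub>G\<^esub>}" by auto
    ultimately show "\<exists>O'. openin T O' \<and> w \<in> O' \<and> O' \<subseteq> topspace T - {\<one>\<^bsub>G\<^esub>}" by blast
  qed
  then show ?thesis unfolding closedin_def tsT by simp
qed

lemma Y_sep:
  assumes cl: "\<And>n. openin X (U n) \<and> closedin X (U n)" and dec: "\<And>n. U (Suc n) \<subseteq> U n"
    and T0: "0 \<in> topspace (qtop X (gfun U))"
    and iS: "i ` topspace (qtop X (gfun U)) \<subseteq> carrier G"
    and y0: "y0 \<in> topspace (qtop X (gfun U))" and i0: "i y0 = \<one>\<^bsub>G\<^esub>"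
    and F: "F \<subseteq> topspace (qtop X (gfun U))" and fin: "finite F"
  shows "\<exists>f. continuous_map (qtop X (gfun U)) (discrete_topology (carrier G)) f \<and> f y0 = \<one>\<^bsub>G\<^esub> \<and> (\<forall>y\<in>F. f y = i y)"
proof -
  let ?Y = "qtop X (gfun U)"
  let ?T = "topspace ?Y"
  define f where "f = (\<lambda>y. if y \<in> insert y0 F then i y else i 0)"
  have f0: "f 0 = i 0" unfolding f_def by simp
  have "continuous_map ?Y (discrete_topology (carrier G)) f"
    unfolding continuous_map_def
  proof (intro conjI allI impI)
    show "f \<in> ?T \<rightarrow> topspace (discrete_topology (carrier G))"
      unfolding f_def using iS T0 by auto
    fix A assume "openin (discrete_topology (carrier G)) A"
    show "openin ?Y {x \<in> ?T. f x \<in> A}"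
    proof (rule Y_open[of X U, OF cl dec])
      show "{x \<in> ?T. f x \<in> A} \<subseteq> gfun U ` topspace X" by (auto simp: topspace_qtop)
      assume "0 \<in> {x \<in> ?T. f x \<in> A}"
      then have A0: "i 0 \<in> A" using f0 by simp
      have "gfun U ` topspace X - {x \<in> ?T. f x \<in> A} \<subseteq> insert y0 F"
      proof
        fix y assume y: "y \<in> gfun U ` topspace X - {x \<in> ?T. f x \<in> A}"
        show "y \<in> insert y0 F"
        proof (rule ccontr)
          assume "y \<notin> insert y0 F"
          then have "f y = i 0" unfolding f_def by simp
          then show False using y A0 by (simp add: topspace_qtop)
        qed
      qed
      then show "finite (gfun U ` topspace X - {x \<in> ?T. f x \<in> A})"
        by (rule finite_subset) (simp add: fin)
    qed
  qed
  moreover have "f y0 = \<one>\<^bsub>G\<^esub>" unfolding f_def using i0 by simp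
  moreover have "\<forall>y\<in>F. f y = i y" unfolding f_def by simp
  ultimately show ?thesis by blast
qed

lemma main_quotient:
  fixes X :: "'a topology" and U :: "nat \<Rightarrow> 'a set"
    and GX :: "'a list monoid" and GY :: "nat list monoid"
  assumes cl: "\<And>n. openin X (U n) \<and> closedin X (U n)" and dec: "\<And>n. U (Suc n) \<subseteq> U n"
    and T0: "0 \<in> topspace (qtop X (gfun U))"
    and gx: "graev_free V X x0 GX TX iX" and gy: "graev_free V (qtop X (gfun U)) y0 GY TY iY"
  shows "topological_quotient GX TX GY TY"
proof -
  let ?Y = "qtop X (gfun U)"
  let ?g = "gfun U"
  note DX = graev_free_D[OF gx]
  note DY = graev_free_D[OF gy]
  have tgX: "topological_group GX TX" using DX(1) by (rule in_variety_tg)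
  have tgY: "topological_group GY TY" using DY(1) by (rule in_variety_tg)
  have gX: "group GX" using tgX by (rule tg_group)
  have gY: "group GY" using tgY by (rule tg_group)
  interpret GX: group GX by (rule gX)
  interpret GY: group GY by (rule gY)
  have tsX: "topspace TX = carrier GX" using tg_topspace[OF tgX] .
  have tsY: "topspace TY = carrier GY" using tg_topspace[OF tgY] .
  have iXc: "continuous_map X TX iX" using DX(3) by (rule embedding_map_cont)
  have iYc: "continuous_map ?Y TY iY" using DY(3) by (rule embedding_map_cont)
  have iXS: "iX ` topspace X \<subseteq> carrier GX" using continuous_map_image_subset_topspace[OF iXc] tsX by simp
  have iYS: "iY ` topspace ?Y \<subseteq> carrier GY" using continuous_map_image_subset_topspace[OF iYc] tsY by simp
  have gc: "continuous_map X ?Y ?g" by (rule continuous_map_qtop)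
  have tsQ: "topspace ?Y = ?g ` topspace X" by (rule topspace_qtop)
  have gx0: "?g x0 \<in> topspace ?Y" using DX(2) tsQ by simp
  have iYgx0: "iY (?g x0) \<in> carrier GY" using gx0 iYS by blast
  define c where "c = inv\<^bsub>GY\<^esub> (iY (?g x0))"
  have cc: "c \<in> carrier GY" unfolding c_def using iYgx0 by simp
  define e :: "nat list \<Rightarrow> 'a list" where "e = (\<lambda>l. replicate (to_nat l) undefined)"
  have inje: "inj e"
  proof (rule injI)
    fix a b assume "e a = e b"
    then have "length (e a) = length (e b)" by simp
    then have "to_nat a = to_nat b" unfolding e_def by simp
    then show "a = b" using injD[OF inj_to_nat] by blast
  qed
  have de: "\<And>l. inv_into UNIV e (e l) = l" using inje by (simp add: inv_into_f_f)
  note TR = tr_variety[OF DY(1) inje]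
  define f0 where "f0 = (\<lambda>x. e (iY (?g x) \<otimes>\<^bsub>GY\<^esub> c))"
  have "continuous_map X (tr_top e GY TY) (e \<circ> ((\<lambda>z. z \<otimes>\<^bsub>GY\<^esub> c) \<circ> (iY \<circ> ?g)))"
    by (rule continuous_map_compose[OF continuous_map_compose[OF continuous_map_compose[OF gc iYc]
          tg_right_cont[OF tgY cc]] TR(2)])
  then have f0c: "continuous_map X (tr_top e GY TY) f0" unfolding f0_def comp_def .
  have f0x0: "f0 x0 = \<one>\<^bsub>tr_grp e GY\<^esub>"
    unfolding f0_def c_def tr_grp_simps using iYgx0 by simp
  obtain h where h: "h \<in> hom GX (tr_grp e GY)" "continuous_map TX (tr_top e GY TY) h"
      "\<forall>x\<in>topspace X. h (iX x) = f0 x"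
    using DX(6)[OF TR(1) f0c f0x0] by blast
  define \<Phi> where "\<Phi> = (\<lambda>x. inv_into UNIV e (h x))"
  have dh: "inv_into UNIV e \<in> hom (tr_grp e GY) GY" by (rule tr_group(3)[OF gY inje])
  have \<Phi>hom: "\<Phi> \<in> hom GX GY"
  proof (rule homI)
    fix x assume "x \<in> carrier GX"
    then show "\<Phi> x \<in> carrier GY" unfolding \<Phi>_def by (intro hom_in_carrier[OF dh] hom_in_carrier[OF h(1)])
  next
    fix x y assume xy: "x \<in> carrier GX" "y \<in> carrier GX"
    have "\<Phi> (x \<otimes>\<^bsub>GX\<^esub> y) = inv_into UNIV e (h x \<otimes>\<^bsub>tr_grp e GY\<^esub> h y)"
      unfolding \<Phi>_def using hom_mult[OF h(1) xy] by simp
    also have "\<dots> = \<Phi> x \<otimes>\<^bsub>GY\<^esub> \<Phi> y"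
      unfolding \<Phi>_def by (rule hom_mult[OF dh hom_in_carrier[OF h(1) xy(1)] hom_in_carrier[OF h(1) xy(2)]])
    finally show "\<Phi> (x \<otimes>\<^bsub>GX\<^esub> y) = \<Phi> x \<otimes>\<^bsub>GY\<^esub> \<Phi> y" .
  qed
  have "continuous_map TX TY (inv_into UNIV e \<circ> h)"
    by (rule continuous_map_compose[OF h(2) TR(3)])
  then have \<Phi>c: "continuous_map TX TY \<Phi>" unfolding \<Phi>_def comp_def .
  have \<Phi>i: "\<And>x. x \<in> topspace X \<Longrightarrow> \<Phi> (iX x) = iY (?g x) \<otimes>\<^bsub>GY\<^esub> c"
    unfolding \<Phi>_def using h(3) by (simp add: f0_def de)
  interpret gh: group_hom GX GY \<Phi> using \<Phi>hom by (simp add: group_hom_def group_hom_axioms_def GX.is_group GY.is_group)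
  have surj: "\<Phi> ` carrier GX = carrier GY"
  proof
    show "\<Phi> ` carrier GX \<subseteq> carrier GY" using hom_in_carrier[OF \<Phi>hom] by blast
    have sub: "subgroup (\<Phi> ` carrier GX) GY" by (rule gh.img_is_subgroup)
    obtain x1 where x1: "x1 \<in> topspace X" "?g x1 = y0" using DY(2) tsQ by auto
    have "\<Phi> (iX x1) = c" using \<Phi>i[OF x1(1)] x1(2) DY(4) cc by simp
    moreover have "iX x1 \<in> carrier GX" using x1(1) iXS by blast
    ultimately have cim: "c \<in> \<Phi> ` carrier GX" by (metis image_eqI)
    have "iY ` topspace ?Y \<subseteq> \<Phi> ` carrier GX"
    proof
      fix z assume "z \<in> iY ` topspace ?Y"
      then obtain x where x: "x \<in> topspace X" "z = iY (?g x)" using tsQ by auto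
      have zc: "z \<in> carrier GY" using x iYS tsQ by auto
      have "\<Phi> (iX x) \<in> \<Phi> ` carrier GX" using x(1) iXS by blast
      then have "z \<otimes>\<^bsub>GY\<^esub> c \<in> \<Phi> ` carrier GX" using \<Phi>i[OF x(1)] x(2) by simp
      then have "(z \<otimes>\<^bsub>GY\<^esub> c) \<otimes>\<^bsub>GY\<^esub> inv\<^bsub>GY\<^esub> c \<in> \<Phi> ` carrier GX"
        by (rule subgroup.m_closed[OF sub _ subgroup.m_inv_closed[OF sub cim]])
      then show "z \<in> \<Phi> ` carrier GX" using zc cc by (simp add: GY.m_assoc)
    qed
    then have "generate GY (iY ` topspace ?Y) \<subseteq> \<Phi> ` carrier GX"
      by (rule GY.generate_subgroup_incl[OF _ sub])
    then show "carrier GY \<subseteq> \<Phi> ` carrier GX" using DY(5) by simp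
  qed
  let ?\<tau> = "qtop TX \<Phi>"
  have tg\<tau>: "topological_group GY ?\<tau>" by (rule qg_tg[OF tgX gY \<Phi>hom surj])
  have V\<tau>: "in_variety V GY ?\<tau>" by (rule in_variety_retop[OF DY(1) tg\<tau>])
  have "continuous_map X ?\<tau> (\<Phi> \<circ> iX)" by (rule continuous_map_compose[OF iXc continuous_map_qtop])
  then have "continuous_map X ?\<tau> ((\<lambda>y. iY y \<otimes>\<^bsub>GY\<^esub> c) \<circ> ?g)"
    by (rule continuous_map_eq) (simp add: \<Phi>i)
  then have kc: "continuous_map ?Y ?\<tau> (\<lambda>y. iY y \<otimes>\<^bsub>GY\<^esub> c)"
    by (rule continuous_compose_quotient_map[OF quotient_map_qtop])
  have icc: "inv\<^bsub>GY\<^esub> c \<in> carrier GY" using cc by simp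
  have "continuous_map ?Y ?\<tau> ((\<lambda>z. z \<otimes>\<^bsub>GY\<^esub> inv\<^bsub>GY\<^esub> c) \<circ> (\<lambda>y. iY y \<otimes>\<^bsub>GY\<^esub> c))"
    by (rule continuous_map_compose[OF kc tg_right_cont[OF tg\<tau> icc]])
  then have iY\<tau>: "continuous_map ?Y ?\<tau> iY"
  proof (rule continuous_map_eq)
    fix y assume "y \<in> topspace ?Y"
    then have "iY y \<in> carrier GY" using iYS by blast
    then show "((\<lambda>z. z \<otimes>\<^bsub>GY\<^esub> inv\<^bsub>GY\<^esub> c) \<circ> (\<lambda>y. iY y \<otimes>\<^bsub>GY\<^esub> c)) y = iY y"
      using cc by (simp add: GY.m_assoc)
  qed
  obtain h2 where h2: "h2 \<in> hom GY GY" "continuous_map TY ?\<tau> h2" "\<forall>y\<in>topspace ?Y. h2 (iY y) = iY y"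
    using DY(6)[OF V\<tau> iY\<tau> DY(4)] by blast
  have h2id: "\<And>w. w \<in> carrier GY \<Longrightarrow> h2 w = w"
  proof -
    fix w assume "w \<in> carrier GY"
    then have "w \<in> generate GY (iY ` topspace ?Y)" using DY(5) by simp
    moreover have fx: "\<And>s. s \<in> iY ` topspace ?Y \<Longrightarrow> h2 s = s" using h2(3) by blast
    ultimately show "h2 w = w"
      using hom_fix_generate[OF gY h2(1) iYS fx] by blast
  qed
  have idc: "continuous_map TY ?\<tau> (\<lambda>w. w)"
    by (rule continuous_map_eq[OF h2(2)]) (simp add: h2id tsY)
  have qm: "quotient_map TX TY \<Phi>"
    unfolding quotient_map_def
  proof (intro conjI allI impI)
    show "\<Phi> ` topspace TX = topspace TY" using surj tsX tsY by simp
    fix W assume W: "W \<subseteq> topspace TY"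
    show "openin TX {x \<in> topspace TX. \<Phi> x \<in> W} \<longleftrightarrow> openin TY W"
    proof
      assume o: "openin TX {x \<in> topspace TX. \<Phi> x \<in> W}"
      have "openin ?\<tau> W" unfolding openin_qtop using o W surj tsX tsY by simp
      then have "openin TY {w \<in> topspace TY. w \<in> W}" by (rule openin_continuous_map_preimage[OF idc])
      moreover have "{w \<in> topspace TY. w \<in> W} = W" using W by blast
      ultimately show "openin TY W" by simp
    next
      assume "openin TY W"
      then show "openin TX {x \<in> topspace TX. \<Phi> x \<in> W}" by (rule openin_continuous_map_preimage[OF \<Phi>c])
    qed
  qed
  have closed1: "closedin TY {\<one>\<^bsub>GY\<^esub>}"
  proof (rule free_T1[OF gy])
    fix F assume "finite F" "F \<subseteq> topspace ?Y"
    then show "\<exists>f. continuous_map ?Y (discrete_topology (carrier GY)) f \<and> f y0 = \<one>\<^bsub>GY\<^esub> \<and> (\<forall>y\<in>F. f y = iY y)"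
      using Y_sep[of X U, OF cl dec T0 iYS DY(2) DY(4)] by blast
  qed
  let ?N = "kernel GX GY \<Phi>"
  have Nn: "?N \<lhd> GX" by (rule gh.normal_kernel)
  have "?N = {x \<in> topspace TX. \<Phi> x \<in> {\<one>\<^bsub>GY\<^esub>}}" unfolding kernel_def tsX by simp
  then have Nc: "closedin TX ?N" using closedin_continuous_map_preimage[OF \<Phi>c closed1] by simp
  have iso: "(\<lambda>A. the_elem (\<Phi> ` A)) \<in> iso (GX Mod ?N) GY" by (rule gh.FactGroup_iso_set[OF surj])
  have coset: "\<And>x. x \<in> carrier GX \<Longrightarrow> the_elem (\<Phi> ` (?N #>\<^bsub>GX\<^esub> x)) = \<Phi> x"
  proof -
    fix x assume x: "x \<in> carrier GX"
    have "\<Phi> ` (?N #>\<^bsub>GX\<^esub> x) = {\<Phi> x}"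
    proof (rule Set.set_eqI, rule iffI)
      fix z assume "z \<in> \<Phi> ` (?N #>\<^bsub>GX\<^esub> x)"
      then obtain n where n: "n \<in> ?N" "z = \<Phi> (n \<otimes>\<^bsub>GX\<^esub> x)" unfolding r_coset_def by blast
      have "n \<in> carrier GX" "\<Phi> n = \<one>\<^bsub>GY\<^esub>" using n(1) unfolding kernel_def by simp_all
      then show "z \<in> {\<Phi> x}" using n(2) x by simp
    next
      fix z assume "z \<in> {\<Phi> x}"
      then have "z = \<Phi> (\<one>\<^bsub>GX\<^esub> \<otimes>\<^bsub>GX\<^esub> x)" using x by simp
      moreover have "\<one>\<^bsub>GX\<^esub> \<in> ?N" unfolding kernel_def by simp
      ultimately show "z \<in> \<Phi> ` (?N #>\<^bsub>GX\<^esub> x)" unfolding r_coset_def by blast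
    qed
    then show "the_elem (\<Phi> ` (?N #>\<^bsub>GX\<^esub> x)) = \<Phi> x" by simp
  qed
  have "quotient_map TX TY (\<lambda>x. (\<lambda>A. the_elem (\<Phi> ` A)) (?N #>\<^bsub>GX\<^esub> x))"
    by (rule quotient_map_eq[OF qm]) (simp add: coset tsX)
  then show ?thesis unfolding topological_quotient_def using Nn Nc iso by blast
qed

theorem proposition1:
  fixes X :: "'a topology" and U :: "nat \<Rightarrow> 'a set"
  assumes "tychonoff_space X"
    and "\<And>n. openin X (U n) \<and> closedin X (U n)"
    and "\<And>n. U (Suc n) \<subseteq> U n"
    and "(\<Inter>n. U n) \<noteq> {}"
    and "\<not> openin X (\<Inter>n. U n)"
  shows "\<exists>Y :: nat topology.
           tychonoff_space Y \<and> countable (topspace Y) \<and>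
           (\<exists>y\<in>topspace Y. \<not> openin Y {y}) \<and>
           (\<forall>V \<in> {AllGroups, AbelianGroups, BooleanGroups}.
              \<forall>x0 y0 (GX :: 'a list monoid) TX iX (GY :: nat list monoid) TY iY.
                graev_free V X x0 GX TX iX \<and> graev_free V Y y0 GY TY iY \<longrightarrow>
                topological_quotient GX TX GY TY)"
proof -
  have cl: "\<And>n. openin X (U n) \<and> closedin X (U n)" by (rule assms(2))
  have dec: "\<And>n. U (Suc n) \<subseteq> U n" by (rule assms(3))
  note YP = Y_props[of X U, OF cl dec assms(4) assms(5)]
  show ?thesis
  proof (rule exI[of _ "qtop X (gfun U)"], intro conjI)
    show "tychonoff_space (qtop X (gfun U))" by (rule YP(1))
    show "countable (topspace (qtop X (gfun U)))" by (rule YP(2))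
    show "\<exists>y\<in>topspace (qtop X (gfun U)). \<not> openin (qtop X (gfun U)) {y}"
      using YP(3,4) by blast
    show "\<forall>V \<in> {AllGroups, AbelianGroups, BooleanGroups}.
              \<forall>x0 y0 (GX :: 'a list monoid) TX iX (GY :: nat list monoid) TY iY.
                graev_free V X x0 GX TX iX \<and> graev_free V (qtop X (gfun U)) y0 GY TY iY \<longrightarrow>
                topological_quotient GX TX GY TY"
    proof (intro ballI allI impI)
      fix V x0 y0 TX iX TY iY and GX :: "'a list monoid" and GY :: "nat list monoid"
      assume H: "graev_free V X x0 GX TX iX \<and> graev_free V (qtop X (gfun U)) y0 GY TY iY"
      show "topological_quotient GX TX GY TY"
        by (rule main_quotient[of X U, OF cl dec YP(3) conjunct1[OF H] conjunct2[OF H]])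
    qed
  qed
qed

end
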